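(* Let $n\geq 7$ and $p\geq 2$. Then $\rho(\mathbf{S}_{p}(U_{4}))<\rho(\mathbf{S}_{p}(U_{3}))$.
   Context: All graphs are simple and connected; $d_i$ is the degree of $v_i$. The $p$-Sombor matrix $\mathbf{S}_{p}(G)$ has $(i,j)$-entry $(d_i^{p}+d_j^{p})^{1/p}$ if $v_iv_j\in E(G)$ and $0$ otherwise; $\rho(\mathbf{S}_{p}(G))$ is its largest eigenvalue. $U_3$ is the unicyclic graph of order $n$ consisting of a $4$-cycle $v_1v_2v_3v_4$ with $n-4$ pendant vertices attached to $v_4$. $U_4$ is the unicyclic graph of order $n$ consisting of a triangle $xyz$, with $n-5$ pendant vertices attached to $x$ and $2$ pendant vertices attached to $y$. *)

theory Defs
  imports "Jordan_Normal_Form.Char_Poly"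
begin

text \<open>Simple graphs on vertex set {0..<n} given by a symmetric irreflexive edge predicate.\<close>

definition deg :: "nat \<Rightarrow> (nat \<Rightarrow> nat \<Rightarrow> bool) \<Rightarrow> nat \<Rightarrow> nat" where
  "deg n E i = card {j. j < n \<and> E i j}"

definition sombor_mat :: "real \<Rightarrow> nat \<Rightarrow> (nat \<Rightarrow> nat \<Rightarrow> bool) \<Rightarrow> real mat" where
  "sombor_mat p n E = mat n n (\<lambda>(i,j). if E i j
      then (real (deg n E i) powr p + real (deg n E j) powr p) powr (1 / p) else 0)"

definition largest_eig :: "real mat \<Rightarrow> real" where
  "largest_eig A = Max {k. eigenvalue A k}"

text \<open>U3: 4-cycle v0 v1 v2 v3 (paper's v1..v4) with pendants 4..n-1 attached to v3 (paper's v4).\<close>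
definition U3_edge :: "nat \<Rightarrow> nat \<Rightarrow> nat \<Rightarrow> bool" where
  "U3_edge n i j = (i < n \<and> j < n \<and>
     ({i,j} = {0,1} \<or> {i,j} = {1,2} \<or> {i,j} = {2,3} \<or> {i,j} = {3,0} \<or>
      (i = 3 \<and> j \<ge> 4) \<or> (j = 3 \<and> i \<ge> 4)))"

text \<open>U4: triangle x=0, y=1, z=2; pendants 3,4 attached to y; pendants 5..n-1 (n-5 of them) attached to x.\<close>
definition U4_edge :: "nat \<Rightarrow> nat \<Rightarrow> nat \<Rightarrow> bool" where
  "U4_edge n i j = (i < n \<and> j < n \<and>
     ({i,j} = {0,1} \<or> {i,j} = {1,2} \<or> {i,j} = {2,0} \<or>
      {i,j} = {1,3} \<or> {i,j} = {1,4} \<or>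
      (i = 0 \<and> j \<ge> 5) \<or> (j = 0 \<and> i \<ge> 5)))"

end

theory Submission
  imports Defs
begin

definition S :: "real \<Rightarrow> real \<Rightarrow> real \<Rightarrow> real" where
  "S p x y = (x powr p + y powr p) powr (1/p)"
lemma S_sym: "S p x y = S p y x" unfolding S_def by (simp add: add.commute)
lemma S_ge1: assumes "x > 0" "y > 0" "p > 0" shows "x \<le> S p x y"
proof -
  have "x = (x powr p) powr (1/p)" using assms by (simp add: powr_powr)
  also have "\<dots> \<le> (x powr p + y powr p) powr (1/p)"
    by (rule powr_mono2) (use assms in auto)
  finally show ?thesis unfolding S_def .
qed
lemma S_two: assumes "x > 0" "y > 0" shows "S 2 x y = sqrt (x^2 + y^2)"
  using assms unfolding S_def by (simp add: powr_half_sqrt[symmetric] add_pos_pos)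
lemma S_diag: assumes "x > 0" "p > 0" shows "S p x x = x * 2 powr (1/p)"
proof -
  have "S p x x = (2 * x powr p) powr (1/p)" unfolding S_def by simp
  also have "\<dots> = 2 powr (1/p) * x" using assms by (simp add: powr_mult powr_powr)
  finally show ?thesis by simp
qed

lemma S_scale: assumes "x > 0" "y > 0" "q > 0"
  shows "S q x y = x * (1 + (y/x) powr q) powr (1/q)"
proof -
  have "x powr q + y powr q = x powr q * (1 + (y/x) powr q)"
    using assms by (simp add: powr_divide field_simps)
  hence "S q x y = (x powr q) powr (1/q) * (1 + (y/x) powr q) powr (1/q)"
    unfolding S_def using assms by (simp add: powr_mult)
  thus ?thesis using assms by (simp add: powr_powr)
qed
lemma S_mono_aux: assumes "x > 0" "y > 0" "0 < p" "p \<le> q" "y \<le> x"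
  shows "S q x y \<le> S p x y"
proof -
  have r: "0 < y/x" "y/x \<le> 1" using assms by auto
  have "(y/x) powr q \<le> (y/x) powr p" using powr_mono'[OF assms(4)] r by simp
  hence "(1 + (y/x) powr q) powr (1/q) \<le> (1 + (y/x) powr p) powr (1/q)"
    by (intro powr_mono2) (use assms in auto)
  also have "\<dots> \<le> (1 + (y/x) powr p) powr (1/p)"
    by (rule powr_mono) (use assms in \<open>auto simp: frac_le\<close>)
  finally show ?thesis using assms by (simp add: S_scale)
qed
lemma S_mono: assumes "x > 0" "y > 0" "0 < p" "p \<le> q"
  shows "S q x y \<le> S p x y"
  using S_mono_aux[OF assms] S_mono_aux[OF assms(2,1,3,4)] S_sym
  by (cases "y \<le> x") (auto simp: S_sym)

lemma collatz:
  fixes A :: "real mat"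
  assumes A: "A \<in> carrier_mat n n" and nonneg: "\<And>i j. i<n \<Longrightarrow> j<n \<Longrightarrow> A$$(i,j) \<ge> 0"
  and wpos: "\<And>i. i<n \<Longrightarrow> w i > 0"
  and row: "\<And>i. i<n \<Longrightarrow> (\<Sum>j<n. A$$(i,j) * w j) \<le> \<mu> * w i"
  and ev: "eigenvalue A lam"
  shows "lam \<le> \<mu>"
proof -
  obtain v where v: "v \<in> carrier_vec n" "v \<noteq> 0\<^sub>v n" "A *\<^sub>v v = lam \<cdot>\<^sub>v v"
    using ev A unfolding eigenvalue_def eigenvector_def by auto
  obtain j0 where j0: "j0 < n" "v $ j0 \<noteq> 0" using v(1,2) by (metis eq_vecI carrier_vecD index_zero_vec(1) index_zero_vec(2))
  define f where "f i = \<bar>v $ i\<bar> / w i" for i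
  have fin: "finite (f ` {..<n})" "f ` {..<n} \<noteq> {}" using j0 by auto
  obtain i0 where i0: "i0 < n" "f i0 = Max (f ` {..<n})" using Max_in[OF fin] by auto
  define c where "c = f i0"
  have fle: "f j \<le> c" if "j < n" for j unfolding c_def i0(2) using fin that by auto
  have cpos: "c > 0"
  proof -
    have "f j0 > 0" unfolding f_def using j0 wpos by auto
    thus ?thesis using fle[OF j0(1)] by linarith
  qed
  have vb: "\<bar>v $ j\<bar> \<le> c * w j" if "j < n" for j
    using fle[OF that] wpos[OF that] unfolding f_def by (simp add: divide_le_eq)
  have vi0: "\<bar>v $ i0\<bar> = c * w i0" using wpos[OF i0(1)] unfolding c_def f_def by simp
  have "(A *\<^sub>v v) $ i0 = (\<Sum>j<n. A$$(i0,j) * v $ j)"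
    using A v(1) i0(1) by (auto simp: scalar_prod_def lessThan_atLeast0 intro!: sum.cong)
  hence eq: "lam * v $ i0 = (\<Sum>j<n. A$$(i0,j) * v $ j)" using v(3) i0(1) v(1) by simp
  have "\<bar>lam\<bar> * (c * w i0) = \<bar>\<Sum>j<n. A$$(i0,j) * v $ j\<bar>" using eq vi0 by (metis abs_mult)
  also have "\<dots> \<le> (\<Sum>j<n. \<bar>A$$(i0,j) * v $ j\<bar>)" by (rule sum_abs)
  also have "\<dots> \<le> (\<Sum>j<n. A$$(i0,j) * (c * w j))"
    by (intro sum_mono) (use nonneg i0(1) vb in \<open>auto simp: abs_mult intro: mult_left_mono\<close>)
  also have "\<dots> = c * (\<Sum>j<n. A$$(i0,j) * w j)" by (simp add: sum_distrib_left algebra_simps)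
  also have "\<dots> \<le> c * (\<mu> * w i0)" using row[OF i0(1)] cpos by simp
  finally have "\<bar>lam\<bar> * (c * w i0) \<le> \<mu> * (c * w i0)" by (simp add: algebra_simps)
  hence "\<bar>lam\<bar> \<le> \<mu>" using cpos wpos[OF i0(1)] by simp
  thus ?thesis by simp
qed

lemma U4_nb0: "n \<ge> 7 \<Longrightarrow> {j. j<n \<and> U4_edge n 0 j} = {1,2} \<union> {5..<n}"
  unfolding U4_edge_def by (auto simp: doubleton_eq_iff)
lemma U4_nb1: "n \<ge> 7 \<Longrightarrow> {j. j<n \<and> U4_edge n 1 j} = {0,2,3,4}"
  unfolding U4_edge_def by (auto simp: doubleton_eq_iff)
lemma U4_nb2: "n \<ge> 7 \<Longrightarrow> {j. j<n \<and> U4_edge n 2 j} = {0,1}"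
  unfolding U4_edge_def by (auto simp: doubleton_eq_iff)
lemma U4_nb3: "n \<ge> 7 \<Longrightarrow> {j. j<n \<and> U4_edge n 3 j} = {1}"
  unfolding U4_edge_def by (auto simp: doubleton_eq_iff)
lemma U4_nb4: "n \<ge> 7 \<Longrightarrow> {j. j<n \<and> U4_edge n 4 j} = {1}"
  unfolding U4_edge_def by (auto simp: doubleton_eq_iff)
lemma U4_nb5: "n \<ge> 7 \<Longrightarrow> 5 \<le> i \<Longrightarrow> i < n \<Longrightarrow> {j. j<n \<and> U4_edge n i j} = {0}"
  unfolding U4_edge_def by (auto simp: doubleton_eq_iff)

lemma U3_nb0: "n \<ge> 7 \<Longrightarrow> {j. j<n \<and> U3_edge n 0 j} = {1,3}"
  unfolding U3_edge_def by (auto simp: doubleton_eq_iff)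
lemma U3_nb1: "n \<ge> 7 \<Longrightarrow> {j. j<n \<and> U3_edge n 1 j} = {0,2}"
  unfolding U3_edge_def by (auto simp: doubleton_eq_iff)
lemma U3_nb2: "n \<ge> 7 \<Longrightarrow> {j. j<n \<and> U3_edge n 2 j} = {1,3}"
  unfolding U3_edge_def by (auto simp: doubleton_eq_iff)
lemma U3_nb3: "n \<ge> 7 \<Longrightarrow> {j. j<n \<and> U3_edge n 3 j} = {0,2} \<union> {4..<n}"
  unfolding U3_edge_def by (auto simp: doubleton_eq_iff)
lemma U3_nb4: "n \<ge> 7 \<Longrightarrow> 4 \<le> i \<Longrightarrow> i < n \<Longrightarrow> {j. j<n \<and> U3_edge n i j} = {3}"
  unfolding U3_edge_def by (auto simp: doubleton_eq_iff)

lemma card_un: "n \<ge> 7 \<Longrightarrow> k \<ge> 3 \<Longrightarrow> card ({a,b} \<union> {k..<n}) = 2 + (n - k)" if "a < k" "b < k" "a \<noteq> b"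
  using that by (subst card_Un_disjoint) auto

lemma U4_deg: assumes "n \<ge> 7" shows
  "deg n (U4_edge n) 0 = n - 3" "deg n (U4_edge n) 1 = 4" "deg n (U4_edge n) 2 = 2"
  "deg n (U4_edge n) 3 = 1" "deg n (U4_edge n) 4 = 1"
  "5 \<le> i \<Longrightarrow> i < n \<Longrightarrow> deg n (U4_edge n) i = 1"
  unfolding deg_def
  by (simp only: U4_nb0[OF assms] U4_nb1[OF assms] U4_nb2[OF assms] U4_nb3[OF assms] U4_nb4[OF assms] U4_nb5[OF assms]; use assms in \<open>simp add: card_un\<close>)+
lemma U3_deg: assumes "n \<ge> 7" shows
  "deg n (U3_edge n) 0 = 2" "deg n (U3_edge n) 1 = 2" "deg n (U3_edge n) 2 = 2"
  "deg n (U3_edge n) 3 = n - 2"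
  "4 \<le> i \<Longrightarrow> i < n \<Longrightarrow> deg n (U3_edge n) i = 1"
  unfolding deg_def
  by (simp only: U3_nb0[OF assms] U3_nb1[OF assms] U3_nb2[OF assms] U3_nb3[OF assms] U3_nb4[OF assms]; use assms in \<open>simp add: card_un\<close>)+

lemma S_nonneg: "S p x y \<ge> 0" unfolding S_def by simp

lemma sombor_entry: "i < n \<Longrightarrow> j < n \<Longrightarrow> sombor_mat p n E $$ (i,j) =
   (if E i j then S p (real (deg n E i)) (real (deg n E j)) else 0)"
  unfolding sombor_mat_def S_def by simp

lemma sombor_carrier: "sombor_mat p n E \<in> carrier_mat n n" unfolding sombor_mat_def by simp

lemma sombor_rowsum: assumes "i < n"
  shows "(\<Sum>j<n. sombor_mat p n E $$ (i,j) * w j) =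
    (\<Sum>j\<in>{j. j<n \<and> E i j}. S p (real (deg n E i)) (real (deg n E j)) * w j)"
proof -
  have "(\<Sum>j<n. sombor_mat p n E $$ (i,j) * w j) =
     (\<Sum>j<n. if E i j then S p (real (deg n E i)) (real (deg n E j)) * w j else 0)"
    using assms by (intro sum.cong) (auto simp: sombor_entry)
  also have "\<dots> = (\<Sum>j\<in>{j. j<n \<and> E i j}. S p (real (deg n E i)) (real (deg n E j)) * w j)"
    by (subst sum.inter_filter[symmetric]) (auto intro!: sum.cong)
  finally show ?thesis .
qed

lemma sum_un_const: assumes "a < k" "b < k" "a \<noteq> b" "\<And>j. k \<le> j \<Longrightarrow> j < n \<Longrightarrow> f j = c"
  shows "(\<Sum>j\<in>{a,b} \<union> {k..<n}. f j) = f a + f b + real (n - k) * c"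
proof -
  have "(\<Sum>j\<in>{a,b} \<union> {k..<n}. f j) = (\<Sum>j\<in>{a,b}. f j) + (\<Sum>j\<in>{k..<n}. f j)"
    using assms by (subst sum.union_disjoint) auto
  also have "(\<Sum>j\<in>{k..<n}. f j) = (\<Sum>j\<in>{k..<n}. c)" using assms by (intro sum.cong) auto
  finally show ?thesis using assms by simp
qed

lemma U4_upper:
  fixes n :: nat and p \<mu> Y Z lam :: real
  defines "d \<equiv> real (n - 3)"
  assumes n: "n \<ge> 7" and p: "p > 0" and pos: "\<mu> > 0" "Y > 0" "Z > 0"
  and h0: "S p d 4 * Y + S p d 2 * Z + real (n-5) * (S p d 1)^2 \<le> \<mu>^2"
  and h1: "S p d 4 * \<mu> + S p 4 2 * Z + 2 * (S p 4 1)^2 * Y / \<mu> \<le> \<mu> * Y"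
  and h2: "S p d 2 * \<mu> + S p 4 2 * Y \<le> \<mu> * Z"
  and ev: "eigenvalue (sombor_mat p n (U4_edge n)) lam"
  shows "lam \<le> \<mu>"
proof -
  have dpos: "d > 0" using n unfolding d_def by simp
  have Spos: "S p x y > 0" if "x > 0" "y > 0" for x y
    using S_ge1[OF that p] that by linarith
  define w where "w j = (if j = 0 then \<mu> else if j = 1 then Y else if j = 2 then Z
      else if j < 5 then S p 4 1 * Y / \<mu> else S p d 1)" for j :: nat
  have D: "real (deg n (U4_edge n) 0) = d" "real (deg n (U4_edge n) (Suc 0)) = 4"
     "real (deg n (U4_edge n) 2) = 2" "real (deg n (U4_edge n) 3) = 1" "real (deg n (U4_edge n) 4) = 1"
     "\<And>i. 5 \<le> i \<Longrightarrow> i < n \<Longrightarrow> real (deg n (U4_edge n) i) = 1"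
    using U4_deg[OF n] unfolding d_def by auto
  show ?thesis
  proof (rule collatz[OF sombor_carrier _ _ _ ev])
    fix i j assume "i < n" "j < n"
    thus "0 \<le> sombor_mat p n (U4_edge n) $$ (i, j)" by (simp add: sombor_entry S_nonneg)
  next
    fix i assume "i < n"
    show "0 < w i" unfolding w_def using pos dpos by (auto intro!: Spos divide_pos_pos mult_pos_pos)
  next
    fix i assume i: "i < n"
    consider "i = 0" | "i = 1" | "i = 2" | "i = 3" | "i = 4" | "5 \<le> i" by linarith
    thus "(\<Sum>j<n. sombor_mat p n (U4_edge n) $$ (i, j) * w j) \<le> \<mu> * w i"
    proof cases
      case 1
      have "(\<Sum>j<n. sombor_mat p n (U4_edge n) $$ (i, j) * w j)
         = S p d 4 * Y + S p d 2 * Z + real (n-5) * (S p d 1 * S p d 1)"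
        unfolding 1 sombor_rowsum[OF i[unfolded 1]] U4_nb0[OF n]
        by (subst sum_un_const[where c = "S p d 1 * S p d 1"]) (use D n in \<open>auto simp: w_def\<close>)
      thus ?thesis using h0 1 by (simp add: w_def power2_eq_square)
    next
      case 2
      have "(\<Sum>j<n. sombor_mat p n (U4_edge n) $$ (i, j) * w j)
         = S p d 4 * \<mu> + S p 4 2 * Z + 2 * (S p 4 1)^2 * Y / \<mu>"
        unfolding 2 sombor_rowsum[OF i[unfolded 2]] using U4_nb1[OF n] D
        by (simp add: w_def S_sym power2_eq_square)
      thus ?thesis using h1 2 by (simp add: w_def)
    next
      case 3
      have "(\<Sum>j<n. sombor_mat p n (U4_edge n) $$ (i, j) * w j)
         = S p d 2 * \<mu> + S p 4 2 * Y"
        unfolding 3 sombor_rowsum[OF i[unfolded 3]] using U4_nb2[OF n] D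
        by (simp add: w_def S_sym)
      thus ?thesis using h2 3 by (simp add: w_def)
    next
      case 4
      show ?thesis unfolding 4 sombor_rowsum[OF i[unfolded 4]] using U4_nb3[OF n] D pos
        by (simp add: w_def S_sym)
    next
      case 5
      show ?thesis unfolding 5 sombor_rowsum[OF i[unfolded 5]] using U4_nb4[OF n] D pos
        by (simp add: w_def S_sym)
    next
      case 6
      show ?thesis unfolding sombor_rowsum[OF i] U4_nb5[OF n 6 i] using D 6 i pos
        by (simp add: w_def S_sym)
    qed
  qed
qed

lemma mult_mat_vec_sum: "A \<in> carrier_mat n n \<Longrightarrow> v \<in> carrier_vec n \<Longrightarrow> i < n \<Longrightarrow>
   (A *\<^sub>v v) $ i = (\<Sum>j<n. A$$(i,j) * v $ j)"
  by (auto simp: scalar_prod_def lessThan_atLeast0 intro!: sum.cong)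

lemma U3_eigen:
  fixes n :: nat and p lam :: real
  defines "a \<equiv> S p (real (n-2)) 2" and "b \<equiv> S p 2 2" and "c \<equiv> S p (real (n-2)) 1"
    and "k \<equiv> real (n-4)"
  assumes n: "n \<ge> 7" and p: "p > 0" and lpos: "lam > 0" and lb: "lam^2 > 2*b^2"
  and root: "lam^4 - (2*b^2 + 2*a^2 + k*c^2) * lam^2 + 2*k*b^2*c^2 = 0"
  shows "eigenvalue (sombor_mat p n (U3_edge n)) lam"
proof -
  define X where "X = a * lam / (lam^2 - 2*b^2)"
  have den: "lam^2 - 2*b^2 > 0" using lb by simp
  define v where "v = vec n (\<lambda>j. if j = 3 then 1 else if j = 0 \<or> j = 2 then X
        else if j = 1 then 2*b*X/lam else c/lam)"
  have D: "real (deg n (U3_edge n) 0) = 2" "real (deg n (U3_edge n) (Suc 0)) = 2"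
     "real (deg n (U3_edge n) 2) = 2" "real (deg n (U3_edge n) 3) = real (n-2)"
     "\<And>i. 4 \<le> i \<Longrightarrow> i < n \<Longrightarrow> real (deg n (U3_edge n) i) = 1"
    using U3_deg[OF n] by auto
  have v: "v \<in> carrier_vec n" unfolding v_def by simp
  have vi: "v $ j = (if j = 3 then 1 else if j = 0 \<or> j = 2 then X
        else if j = 1 then 2*b*X/lam else c/lam)" if "j < n" for j
    unfolding v_def using that by simp
  have v0: "v \<noteq> 0\<^sub>v n"
  proof
    assume "v = 0\<^sub>v n"
    hence "v $ 3 = 0" using n by simp
    thus False using vi[of 3] n by simp
  qed
  have XA: "X * (lam^2 - 2*b^2) = a * lam" unfolding X_def using den by simp
  have eq: "sombor_mat p n (U3_edge n) *\<^sub>v v = lam \<cdot>\<^sub>v v"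
  proof (rule eq_vecI)
    fix i assume "i < dim_vec (lam \<cdot>\<^sub>v v)"
    hence i: "i < n" using v by simp
    have L: "(sombor_mat p n (U3_edge n) *\<^sub>v v) $ i =
       (\<Sum>j\<in>{j. j<n \<and> U3_edge n i j}. S p (real (deg n (U3_edge n) i)) (real (deg n (U3_edge n) j)) * v $ j)"
      by (subst mult_mat_vec_sum[OF sombor_carrier v i], rule sombor_rowsum[OF i])
    consider "i = 0" | "i = 1" | "i = 2" | "i = 3" | "4 \<le> i" by linarith
    thus "(sombor_mat p n (U3_edge n) *\<^sub>v v) $ i = (lam \<cdot>\<^sub>v v) $ i"
    proof cases
      case 1
      have "(sombor_mat p n (U3_edge n) *\<^sub>v v) $ i = b * (2*b*X/lam) + a"
        unfolding L unfolding 1 U3_nb0[OF n] using D n by (simp add: vi a_def b_def S_sym)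
      also have "\<dots> = lam * X" using XA lpos by (simp add: field_simps power2_eq_square)
      finally show ?thesis using 1 v n by (simp add: vi)
    next
      case 2
      have "(sombor_mat p n (U3_edge n) *\<^sub>v v) $ i = b * X + b * X"
        unfolding L unfolding 2 U3_nb1[OF n] using D n by (simp add: vi a_def b_def S_sym)
      thus ?thesis using 2 v n lpos by (simp add: vi)
    next
      case 3
      have "(sombor_mat p n (U3_edge n) *\<^sub>v v) $ i = b * (2*b*X/lam) + a"
        unfolding L unfolding 3 U3_nb2[OF n] using D n by (simp add: vi a_def b_def S_sym)
      also have "\<dots> = lam * X" using XA lpos by (simp add: field_simps power2_eq_square)
      finally show ?thesis using 3 v n by (simp add: vi)
    next
      case 4
      have "(sombor_mat p n (U3_edge n) *\<^sub>v v) $ i = a * X + a * X + k * (c * (c / lam))"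
        unfolding L unfolding 4 U3_nb3[OF n]
        by (subst sum_un_const[where c = "c * (c / lam)"]) (use D n in \<open>auto simp: vi a_def c_def k_def\<close>)
      also have "\<dots> = lam"
      proof -
        have "(a * X + a * X + k * (c * (c / lam))) * (lam * (lam^2 - 2*b^2))
            = 2 * a * (X * (lam^2 - 2*b^2)) * lam + k * c^2 * (lam^2 - 2*b^2)"
          using lpos by (simp add: field_simps power2_eq_square)
        also have "\<dots> = lam * (lam * (lam^2 - 2*b^2))" unfolding XA using root
          by (simp add: algebra_simps power2_eq_square power4_eq_xxxx)
        finally show ?thesis using lpos den by simp
      qed
      finally show ?thesis using 4 v n by (simp add: vi)
    next
      case 5
      have "(sombor_mat p n (U3_edge n) *\<^sub>v v) $ i = c"
        unfolding L U3_nb4[OF n 5 i] using D n 5 i by (simp add: vi c_def S_sym)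
      thus ?thesis using 5 v i lpos by (simp add: vi)
    qed
  qed (use v in \<open>simp add: sombor_mat_def\<close>)
  show ?thesis unfolding eigenvalue_def eigenvector_def
    using v v0 eq by (intro exI[of _ v]) (simp add: sombor_mat_def)
qed

lemma U3_lower:
  fixes n :: nat and p \<mu> :: real
  defines "a \<equiv> S p (real (n-2)) 2" and "b \<equiv> S p 2 2" and "c \<equiv> S p (real (n-2)) 1"
    and "k \<equiv> real (n-4)"
  assumes n: "n \<ge> 7" and p: "p > 0" and mpos: "\<mu> > 0" and mb: "\<mu>^2 > 2*b^2"
  and g: "\<mu>^4 - (2*b^2 + 2*a^2 + k*c^2) * \<mu>^2 + 2*k*b^2*c^2 < 0"
  shows "\<exists>lam > \<mu>. eigenvalue (sombor_mat p n (U3_edge n)) lam"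
proof -
  define B where "B = 2*b^2 + 2*a^2 + k*c^2"
  define C where "C = 2*k*b^2*c^2"
  define h where "h x = x^4 - B * x^2 + C" for x :: real
  have C0: "C \<ge> 0" unfolding C_def k_def by simp
  have B0: "B \<ge> 0" unfolding B_def k_def by simp
  have hm: "h \<mu> < 0" using g unfolding h_def B_def C_def .
  have le: "\<mu> \<le> sqrt B"
  proof (rule ccontr)
    assume "\<not> \<mu> \<le> sqrt B"
    hence "(sqrt B)^2 < \<mu>^2" using B0 by (intro power_strict_mono) auto
    hence "\<mu>^2 > B" using B0 by simp
    have "h \<mu> = \<mu>^2 * (\<mu>^2 - B) + C" unfolding h_def by (simp add: algebra_simps power4_eq_xxxx power2_eq_square)
    hence "h \<mu> \<ge> 0" using C0 \<open>\<mu>^2 > B\<close> by (simp add: add_nonneg_nonneg)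
    thus False using hm by simp
  qed
  have "sqrt B ^ 4 = (sqrt B ^ 2)^2" by (simp flip: power_mult)
  hence "sqrt B ^ 4 = B^2" using B0 by simp
  hence hB: "h (sqrt B) \<ge> 0" unfolding h_def using B0 C0 by (simp add: power2_eq_square)
  obtain x where x: "\<mu> \<le> x" "x \<le> sqrt B" "h x = 0"
  proof -
    have cont: "\<forall>x. \<mu> \<le> x \<and> x \<le> sqrt B \<longrightarrow> isCont h x" unfolding h_def by (intro allI impI continuous_intros)
    have "h \<mu> \<le> 0" using hm by simp
    from IVT[of h \<mu> 0 "sqrt B", OF this hB le cont] show ?thesis using that by blast
  qed
  have xm: "x > \<mu>" using x hm by (cases "x = \<mu>") auto
  have "eigenvalue (sombor_mat p n (U3_edge n)) x"
    unfolding a_def b_def c_def k_def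
  proof (rule U3_eigen[OF n p])
    show "0 < x" using xm mpos by simp
    have "\<mu>^2 \<le> x^2" using x mpos by (intro power_mono) auto
    thus "2 * (S p 2 2)^2 < x^2" using mb unfolding b_def by simp
    show "x^4 - (2*(S p 2 2)^2 + 2*(S p (real (n-2)) 2)^2 + real (n-4)*(S p (real (n-2)) 1)^2) * x^2
        + 2*real (n-4)*(S p 2 2)^2*(S p (real (n-2)) 1)^2 = 0"
      using x(3) unfolding h_def B_def C_def a_def b_def c_def k_def by simp
  qed
  thus ?thesis using xm by blast
qed

lemma U4_upper':
  fixes n :: nat and p \<mu> Y Z lam A Bb G D E :: real
  defines "d \<equiv> real (n - 3)"
  assumes n: "n \<ge> 7" and p: "p > 0" and pos: "\<mu> > 0" "Y > 0" "Z > 0"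
  and bA: "S p d 4 \<le> A" and bB: "S p d 2 \<le> Bb" and bG: "S p 4 2 \<le> G"
  and bD: "(S p 4 1)^2 \<le> D" and bE: "(S p d 1)^2 \<le> E"
  and cL: "A * Y + Bb * Z + real (n-5) * E \<le> \<mu>^2"
  and c1: "A * \<mu> + G * Z + 2 * D * Y / \<mu> \<le> \<mu> * Y"
  and c2: "Bb * \<mu> + G * Y \<le> \<mu> * Z"
  and ev: "eigenvalue (sombor_mat p n (U4_edge n)) lam"
  shows "lam \<le> \<mu>"
proof (rule U4_upper[OF n p pos _ _ _ ev, folded d_def])
  have "S p d 4 * Y \<le> A * Y" using bA pos by (simp add: mult_right_mono)
  moreover have "S p d 2 * Z \<le> Bb * Z" using bB pos by (simp add: mult_right_mono)
  moreover have "real (n-5) * (S p d 1)^2 \<le> real (n-5) * E" using bE by (simp add: mult_left_mono)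
  ultimately show "S p d 4 * Y + S p d 2 * Z + real (n-5) * (S p d 1)^2 \<le> \<mu>^2" using cL by linarith
  have "S p d 4 * \<mu> \<le> A * \<mu>" using bA pos by (simp add: mult_right_mono)
  moreover have "S p 4 2 * Z \<le> G * Z" using bG pos by (simp add: mult_right_mono)
  moreover have "2 * (S p 4 1)^2 * Y / \<mu> \<le> 2 * D * Y / \<mu>" using bD pos
    by (intro divide_right_mono mult_right_mono) auto
  ultimately show "S p d 4 * \<mu> + S p 4 2 * Z + 2 * (S p 4 1)^2 * Y / \<mu> \<le> \<mu> * Y" using c1 by linarith
  have "S p d 2 * \<mu> \<le> Bb * \<mu>" using bB pos by (simp add: mult_right_mono)
  moreover have "S p 4 2 * Y \<le> G * Y" using bG pos by (simp add: mult_right_mono)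
  ultimately show "S p d 2 * \<mu> + S p 4 2 * Y \<le> \<mu> * Z" using c2 by linarith
qed

lemma U3_lower':
  fixes n :: nat and p \<mu> aL bL cL BU CU :: real
  defines "a \<equiv> S p (real (n-2)) 2" and "b \<equiv> S p 2 2" and "c \<equiv> S p (real (n-2)) 1"
    and "k \<equiv> real (n-4)"
  assumes n: "n \<ge> 7" and p: "p > 0" and mpos: "\<mu> > 0"
  and ba: "0 \<le> aL" "aL \<le> a" and bb: "0 \<le> bL" "bL \<le> b" "b^2 \<le> BU"
  and bc: "0 \<le> cL" "cL \<le> c" "c^2 \<le> CU"
  and t1: "2 * BU < \<mu>^2" and t2: "k * CU \<le> \<mu>^2"
  and g0: "\<mu>^4 - (2*bL^2 + 2*aL^2 + k*cL^2) * \<mu>^2 + 2*k*bL^2*cL^2 < 0"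
  shows "\<exists>lam > \<mu>. eigenvalue (sombor_mat p n (U3_edge n)) lam"
proof (rule U3_lower[OF n p mpos, folded a_def b_def c_def k_def])
  show "2 * b^2 < \<mu>^2" using bb t1 by linarith
  define t where "t = \<mu>^2"
  have k0: "k \<ge> 0" unfolding k_def by simp
  have sq: "aL^2 \<le> a^2" "bL^2 \<le> b^2" "cL^2 \<le> c^2" using ba bb bc by (auto intro: power_mono)
  have e1: "2*b^2*t + k*c^2*t - 2*k*b^2*c^2 - (2*bL^2*t + k*c^2*t - 2*k*bL^2*c^2) = 2*(b^2-bL^2)*(t - k*c^2)"
    by (simp add: algebra_simps)
  have "k * c^2 \<le> k * CU" using bc k0 by (simp add: mult_left_mono)
  hence "t - k*c^2 \<ge> 0" using t2 unfolding t_def by linarith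
  hence i1: "2*(b^2-bL^2)*(t - k*c^2) \<ge> 0" using sq by simp
  have e2: "2*bL^2*t + k*c^2*t - 2*k*bL^2*c^2 - (2*bL^2*t + k*cL^2*t - 2*k*bL^2*cL^2) = k*(c^2-cL^2)*(t - 2*bL^2)"
    by (simp add: algebra_simps)
  have "t - 2*bL^2 \<ge> 0" using sq bb t1 unfolding t_def by linarith
  hence i2: "k*(c^2-cL^2)*(t - 2*bL^2) \<ge> 0" using sq k0 by simp
  have i3: "2*(a^2 - aL^2)*t \<ge> 0" using sq unfolding t_def by simp
  have mt: "\<mu>^4 = t^2" unfolding t_def by (simp flip: power_mult)
  have "\<mu>^4 - (2*b^2 + 2*a^2 + k*c^2) * \<mu>^2 + 2*k*b^2*c^2
      = t^2 - (2*bL^2 + 2*aL^2 + k*cL^2) * t + 2*k*bL^2*cL^2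
        - (2*(a^2 - aL^2)*t) - 2*(b^2-bL^2)*(t - k*c^2) - k*(c^2-cL^2)*(t - 2*bL^2)"
    unfolding t_def by (simp add: algebra_simps flip: power_mult)
  moreover have "t^2 - (2*bL^2 + 2*aL^2 + k*cL^2) * t + 2*k*bL^2*cL^2 < 0"
    using g0 unfolding mt[symmetric] unfolding t_def .
  ultimately show "\<mu>^4 - (2*b^2 + 2*a^2 + k*c^2) * \<mu>^2 + 2*k*b^2*c^2 < 0"
    using i1 i2 i3 by linarith
qed

lemma eig_finite: assumes "(A :: real mat) \<in> carrier_mat n n" shows "finite {k. eigenvalue A k}"
proof -
  have "char_poly A \<noteq> 0" using degree_monic_char_poly[OF assms] by auto
  hence "finite {k. poly (char_poly A) k = 0}" by (rule poly_roots_finite)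
  thus ?thesis using eigenvalue_root_char_poly[OF assms] by simp
qed

lemma U4_eig0: assumes n: "n \<ge> 7" and p: "p > 0" shows "eigenvalue (sombor_mat p n (U4_edge n)) 0"
proof -
  define v :: "real vec" where "v = vec n (\<lambda>j. if j = 3 then 1 else if j = 4 then -1 else 0)"
  have v: "v \<in> carrier_vec n" unfolding v_def by simp
  have vi: "v $ j = (if j = 3 then 1 else if j = 4 then -1 else 0)" if "j < n" for j
    unfolding v_def using that by simp
  have v0: "v \<noteq> 0\<^sub>v n"
  proof
    assume "v = 0\<^sub>v n"
    hence "v $ 3 = 0" using n by simp
    thus False using vi[of 3] n by simp
  qed
  have D: "real (deg n (U4_edge n) 0) = real (n-3)" "real (deg n (U4_edge n) (Suc 0)) = 4"
     "real (deg n (U4_edge n) 2) = 2" "real (deg n (U4_edge n) 3) = 1" "real (deg n (U4_edge n) 4) = 1"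
     "\<And>i. 5 \<le> i \<Longrightarrow> i < n \<Longrightarrow> real (deg n (U4_edge n) i) = 1"
    using U4_deg[OF n] by auto
  have eq: "sombor_mat p n (U4_edge n) *\<^sub>v v = 0 \<cdot>\<^sub>v v"
  proof (rule eq_vecI)
    fix i assume "i < dim_vec (0 \<cdot>\<^sub>v v)"
    hence i: "i < n" using v by simp
    have L: "(sombor_mat p n (U4_edge n) *\<^sub>v v) $ i =
       (\<Sum>j\<in>{j. j<n \<and> U4_edge n i j}. S p (real (deg n (U4_edge n) i)) (real (deg n (U4_edge n) j)) * v $ j)"
      by (subst mult_mat_vec_sum[OF sombor_carrier v i], rule sombor_rowsum[OF i])
    consider "i = 0" | "i = 1" | "i = 2" | "i = 3" | "i = 4" | "5 \<le> i" by linarith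
    thus "(sombor_mat p n (U4_edge n) *\<^sub>v v) $ i = (0 \<cdot>\<^sub>v v) $ i"
    proof cases
      case 1
      have "(sombor_mat p n (U4_edge n) *\<^sub>v v) $ i = 0"
        unfolding L unfolding 1 U4_nb0[OF n]
        by (subst sum_un_const[where c = 0]) (use D n in \<open>auto simp: vi\<close>)
      thus ?thesis using i v by simp
    next
      case 2
      have "(sombor_mat p n (U4_edge n) *\<^sub>v v) $ i = 0"
        unfolding L unfolding 2 U4_nb1[OF n] using D n by (simp add: vi)
      thus ?thesis using i v by simp
    next
      case 3
      have "(sombor_mat p n (U4_edge n) *\<^sub>v v) $ i = 0"
        unfolding L unfolding 3 U4_nb2[OF n] using D n by (simp add: vi)
      thus ?thesis using i v by simp
    next
      case 4
      have "(sombor_mat p n (U4_edge n) *\<^sub>v v) $ i = 0"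
        unfolding L unfolding 4 U4_nb3[OF n] using D n by (simp add: vi)
      thus ?thesis using i v by simp
    next
      case 5
      have "(sombor_mat p n (U4_edge n) *\<^sub>v v) $ i = 0"
        unfolding L unfolding 5 U4_nb4[OF n] using D n by (simp add: vi)
      thus ?thesis using i v by simp
    next
      case 6
      have "(sombor_mat p n (U4_edge n) *\<^sub>v v) $ i = 0"
        unfolding L U4_nb5[OF n 6 i] using D n by (simp add: vi)
      thus ?thesis using i v by simp
    qed
  qed (use v in \<open>simp add: sombor_mat_def\<close>)
  show ?thesis unfolding eigenvalue_def eigenvector_def
    using v v0 eq by (intro exI[of _ v]) (simp add: sombor_mat_def)
qed



lemma sqrt_le_cert: "0 \<le> y \<Longrightarrow> x \<le> y^2 \<Longrightarrow> sqrt x \<le> y"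
  using real_sqrt_le_mono[of x "y^2"] by simp

lemma S_le2: assumes "p \<ge> 2" "x > 0" "y > 0" shows "S p x y \<le> sqrt (x^2 + y^2)"
  using S_mono[OF assms(2,3), of 2 p] assms S_two by simp

lemma S_le2_sq: assumes "p \<ge> 2" "x > 0" "y > 0" "x^2 + y^2 \<le> B" shows "(S p x y)^2 \<le> B"
proof -
  have "(S p x y)^2 \<le> (sqrt (x^2 + y^2))^2" using S_le2[OF assms(1-3)] S_nonneg by (intro power_mono) auto
  thus ?thesis using assms(4) by simp
qed

lemma S_le2_cert: assumes "p \<ge> 2" "x > 0" "y > 0" "0 \<le> r" "x^2 + y^2 \<le> r^2" shows "S p x y \<le> r"
  using S_le2[OF assms(1-3)] sqrt_le_cert[OF assms(4,5)] by linarith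

lemma S_ge2: assumes "x > 0" "y > 0" "p > 0" shows "y \<le> S p x y"
  using S_ge1[OF assms(2,1,3)] by (simp add: S_sym)

lemma key_large: assumes n: "n \<ge> 9" and p: "p \<ge> 2"
  shows "\<exists>\<mu>. (\<forall>lam. eigenvalue (sombor_mat p n (U4_edge n)) lam \<longrightarrow> lam \<le> \<mu>) \<and>
            (\<exists>lam > \<mu>. eigenvalue (sombor_mat p n (U3_edge n)) lam)"
proof -
  define m where "m = real n - 3"
  have m6: "m \<ge> 6" using n unfolding m_def by simp
  have R: "real (n-3) = m" "real (n-2) = m+1" "real (n-4) = m - 1" "real (n-5) = m - 2"
    using n unfolding m_def by auto
  have n7: "n \<ge> 7" using n by simp
  have p0: "p > 0" using p by simp
  define t where "t = m^3 + 2*m^2 + 7*m"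
  define \<mu> where "\<mu> = sqrt t"
  have tpos: "t > 0" unfolding t_def using m6 by (simp add: add_pos_pos)
  have mu2: "\<mu>^2 = t" unfolding \<mu>_def using tpos by simp
  have mupos: "\<mu> > 0" unfolding \<mu>_def using tpos by simp
  have "(3*m)^2 \<le> t"
  proof -
    have "(m-6)*(m-1) \<ge> 0" using m6 by simp
    hence "m * ((m-6)*(m-1) + 1) \<ge> 0" using m6 by simp
    thus ?thesis unfolding t_def by (simp add: power2_eq_square power3_eq_cube algebra_simps)
  qed
  hence mu3: "\<mu> \<ge> 3*m" unfolding \<mu>_def using m6 by (simp add: real_le_rsqrt)
  have U4: "lam \<le> \<mu>" if ev: "eigenvalue (sombor_mat p n (U4_edge n)) lam" for lam
  proof (rule U4_upper'[OF n7 p0 mupos _ _ _ _ _ _ _ _ _ _ ev, unfolded R,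
        where Y = "2*m" and Z = "2*m" and A = "m + 3/2" and Bb = "m+1" and G = "9/2" and D = 17 and E = "m^2+1"])
    show "0 < 2*m" "0 < 2*m" using m6 by simp_all
    show "S p m 4 \<le> m + 3/2" using m6 by (intro S_le2_cert[OF p]) (auto simp: power2_eq_square algebra_simps)
    show "S p m 2 \<le> m + 1" using m6 by (intro S_le2_cert[OF p]) (auto simp: power2_eq_square algebra_simps)
    show "S p 4 2 \<le> 9/2" by (intro S_le2_cert[OF p]) (auto simp: power2_eq_square)
    show "(S p 4 1)^2 \<le> 17" by (intro S_le2_sq[OF p]) auto
    show "(S p m 1)^2 \<le> m^2 + 1" using m6 by (intro S_le2_sq[OF p]) auto
    show "(m + 3/2) * (2*m) + (m+1) * (2*m) + (m - 2) * (m^2+1) \<le> \<mu>^2"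
      unfolding mu2 t_def using m6 by (simp add: algebra_simps power2_eq_square power3_eq_cube)
    show "(m + 1) * \<mu> + 9/2 * (2*m) \<le> \<mu> * (2*m)"
    proof -
      have "9*m \<le> 3*m*(m-1)" using m6 by (simp add: algebra_simps power2_eq_square)
      also have "\<dots> \<le> \<mu> * (m-1)" using mu3 m6 by (intro mult_right_mono) auto
      finally show ?thesis by (simp add: algebra_simps)
    qed
    show "(m + 3/2) * \<mu> + 9/2 * (2*m) + 2 * 17 * (2*m) / \<mu> \<le> \<mu> * (2*m)"
    proof -
      have "68*m / \<mu> \<le> 68*m / (3*m)" using mu3 m6 by (intro divide_left_mono) auto
      also have "\<dots> = 68/3" using m6 by simp
      finally have a: "2 * 17 * (2*m) / \<mu> \<le> 68/3" by simp
      have "m*(m*3) \<ge> m*18" using m6 by (intro mult_left_mono) auto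
      moreover have "3*m*(m - 3/2) = m*(m*3) - 9/2*m" by (simp add: algebra_simps)
      ultimately have "9*m + 68/3 \<le> 3*m*(m - 3/2)" using m6 by linarith
      also have "\<dots> \<le> \<mu> * (m - 3/2)" using mu3 m6 by (intro mult_right_mono) auto
      finally show ?thesis using a by (simp add: algebra_simps)
    qed
  qed
  have U3: "\<exists>lam > \<mu>. eigenvalue (sombor_mat p n (U3_edge n)) lam"
  proof (rule U3_lower'[OF n7 p0 mupos, unfolded R, where aL = "m+1" and bL = 0 and BU = 8 and cL = "m+1" and CU = "(m+1)^2+1"])
    show "0 \<le> m + 1" "0 \<le> m + 1" "m + 1 \<le> S p (m+1) 2" "(0::real) \<le> 0" "0 \<le> S p 2 2" "m + 1 \<le> S p (m+1) 1"
      using m6 p0 by (auto intro!: S_ge1 simp: S_nonneg)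
    show "(S p 2 2)^2 \<le> 8" by (intro S_le2_sq[OF p]) auto
    show "(S p (m+1) 1)^2 \<le> (m+1)^2 + 1" using m6 by (intro S_le2_sq[OF p]) auto
    have e: "\<mu>^2 = m*m*m + 2*(m*m) + 7*m" unfolding mu2 t_def by (simp add: power2_eq_square power3_eq_cube)
    have "0 \<le> m*m*m" "0 \<le> m*m" using m6 by simp_all
    thus "2 * 8 < \<mu>^2" unfolding e using m6 by linarith
    show "(m - 1) * ((m+1)^2 + 1) \<le> \<mu>^2" unfolding mu2 t_def using m6
      by (simp add: algebra_simps power2_eq_square power3_eq_cube)
    have "(m-6)*(m+2) \<ge> 0" using m6 by simp
    hence "t < (m+1)^3" unfolding t_def using m6 by (simp add: algebra_simps power2_eq_square power3_eq_cube)
    hence "t * t < t * (m+1)^3" using tpos by (intro mult_strict_left_mono) auto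
    moreover have "(2*(m+1)^2 + (m-1)*(m+1)^2) = (m+1)^3" by (simp add: power2_eq_square power3_eq_cube algebra_simps)
    ultimately have "t * t < t * (2*(m+1)^2 + (m-1)*(m+1)^2)" by simp
    moreover have "\<mu>^4 = t * t"
    proof -
      have "\<mu>^4 = (\<mu>^2)^2" by (simp flip: power_mult)
      thus ?thesis unfolding mu2 by (simp add: power2_eq_square)
    qed
    ultimately show "\<mu>^4 - (2*0^2 + 2*(m+1)^2 + (m-1)*(m+1)^2) * \<mu>^2 + 2*(m-1)*0^2*(m+1)^2 < 0"
      unfolding mu2 by (simp add: algebra_simps)
  qed
  show ?thesis using U4 U3 by blast
qed

lemma key8: assumes p: "p \<ge> 2"
  shows "\<exists>\<mu>. (\<forall>lam. eigenvalue (sombor_mat p 8 (U4_edge 8)) lam \<longrightarrow> lam \<le> \<mu>) \<and>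
            (\<exists>lam > \<mu>. eigenvalue (sombor_mat p 8 (U3_edge 8)) lam)"
proof -
  have n7: "(8::nat) \<ge> 7" by simp
  have p0: "p > 0" using p by simp
  define \<mu> :: real where "\<mu> = 287/20"
  have mupos: "\<mu> > 0" unfolding \<mu>_def by simp
  have U4: "lam \<le> \<mu>" if ev: "eigenvalue (sombor_mat p 8 (U4_edge 8)) lam" for lam
  proof (rule U4_upper'[OF n7 p0 mupos _ _ _ _ _ _ _ _ _ _ ev,
        where Y = "56/5" and Z = "9" and A = "641/100" and Bb = "539/100" and G = "448/100" and D = 17 and E = 26])
    show "S p (real (8 - 3)) 4 \<le> 641/100" using S_le2_cert[OF p, of 5 4 "641/100"] by (simp add: power2_eq_square)
    show "S p (real (8 - 3)) 2 \<le> 539/100" using S_le2_cert[OF p, of 5 2 "539/100"] by (simp add: power2_eq_square)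
    show "S p 4 2 \<le> 448/100" by (intro S_le2_cert[OF p]) (auto simp: power2_eq_square)
    show "(S p 4 1)^2 \<le> 17" by (intro S_le2_sq[OF p]) auto
    show "(S p (real (8-3)) 1)^2 \<le> 26" using S_le2_sq[OF p, of 5 1 26] by simp
  qed (auto simp: \<mu>_def power2_eq_square)
  have U3: "\<exists>lam > \<mu>. eigenvalue (sombor_mat p 8 (U3_edge 8)) lam"
  proof (rule U3_lower'[OF n7 p0 mupos, where aL = 6 and bL = 0 and BU = 8 and cL = 6 and CU = 37])
    show "6 \<le> S p (real (8-2)) 2" "6 \<le> S p (real (8-2)) 1"
      using p0 by (auto intro!: S_ge1)
    show "0 \<le> S p 2 2" by (simp add: S_nonneg)
    show "(S p 2 2)^2 \<le> 8" by (intro S_le2_sq[OF p]) auto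
    show "(S p (real (8-2)) 1)^2 \<le> 37" using S_le2_sq[OF p, of 6 1 37] by simp
  qed (auto simp: \<mu>_def power2_eq_square power4_eq_xxxx)
  show ?thesis using U4 U3 by blast
qed

lemma key7:
  fixes p uU G dU lL aL cL \<mu> Y Z :: real
  assumes p: "p \<ge> 2" and u: "2 powr (1/p) \<le> uU" and g: "S p 4 2 \<le> G" and dd: "S p 4 1 \<le> dU"
  and l: "lL \<le> 2 powr (1/p)" and a: "aL \<le> S p 5 2" and c: "cL \<le> S p 5 1"
  and nn: "0 \<le> aL" "0 \<le> cL" "0 \<le> lL" and pos: "\<mu> > 0" "Y > 0" "Z > 0"
  and c0: "4*uU*Y + G*Z + 2*dU^2 \<le> \<mu>^2"
  and c1: "4*uU*\<mu> + G*Z + 2*dU^2*Y/\<mu> \<le> \<mu>*Y"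
  and c2: "G*\<mu> + G*Y \<le> \<mu>*Z"
  and t1: "16 < \<mu>^2" and t2: "78 \<le> \<mu>^2"
  and g0: "\<mu>^4 - (2*(2*lL)^2 + 2*aL^2 + 3*cL^2) * \<mu>^2 + 2*3*(2*lL)^2*cL^2 < 0"
  shows "\<exists>\<mu>. (\<forall>lam. eigenvalue (sombor_mat p 7 (U4_edge 7)) lam \<longrightarrow> lam \<le> \<mu>) \<and>
            (\<exists>lam > \<mu>. eigenvalue (sombor_mat p 7 (U3_edge 7)) lam)"
proof -
  have n7: "(7::nat) \<ge> 7" by simp
  have p0: "p > 0" using p by simp
  have S44: "S p 4 4 = 4 * 2 powr (1/p)" using S_diag[of 4 p] p0 by simp
  have S22: "S p 2 2 = 2 * 2 powr (1/p)" using S_diag[of 2 p] p0 by simp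
  have dsq: "(S p 4 1)^2 \<le> dU^2" using dd S_nonneg by (intro power_mono) auto
  have U4: "lam \<le> \<mu>" if ev: "eigenvalue (sombor_mat p 7 (U4_edge 7)) lam" for lam
  proof (rule U4_upper'[OF n7 p0 pos _ _ _ _ _ _ _ _ ev,
        where A = "4*uU" and Bb = G and G = G and D = "dU^2" and E = "dU^2"])
    show "S p (real (7 - 3)) 4 \<le> 4 * uU" using u S44 by simp
    show "S p (real (7 - 3)) 2 \<le> G" using g by simp
    show "(S p (real (7 - 3)) 1)^2 \<le> dU^2" using dsq by simp
  qed (use g dsq c0 c1 c2 in auto)
  have U3: "\<exists>lam > \<mu>. eigenvalue (sombor_mat p 7 (U3_edge 7)) lam"
  proof (rule U3_lower'[OF n7 p0 pos(1), where aL = aL and bL = "2*lL" and BU = 8 and cL = cL and CU = 26])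
    show "2*lL \<le> S p 2 2" using l S22 by simp
    show "(S p 2 2)^2 \<le> 8" by (intro S_le2_sq[OF p]) auto
    show "(S p (real (7-2)) 1)^2 \<le> 26" using S_le2_sq[OF p, of 5 1 26] by simp
  qed (use a c nn t1 t2 g0 in auto)
  show ?thesis using U4 U3 by blast
qed

lemma powr_le_cert: assumes "0 < x" "0 \<le> s" "0 < d" "q * real d = real k" "x ^ k \<le> s ^ d"
  shows "x powr q \<le> s"
proof -
  have "(x powr q) ^ d = x powr (q * real d)" using assms(1) by (simp add: powr_realpow[symmetric] powr_powr)
  also have "\<dots> = x ^ k" using assms(1,4) by (simp add: powr_realpow)
  finally have "(x powr q) ^ d \<le> s ^ d" using assms(5) by simp
  thus ?thesis using assms(2,3) by (cases d) (auto intro: power_le_imp_le_base)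
qed
lemma powr_ge_cert: assumes "0 < x" "0 \<le> s" "0 < d" "q * real d = real k" "s ^ d \<le> x ^ k"
  shows "s \<le> x powr q"
proof -
  have "(x powr q) ^ d = x powr (q * real d)" using assms(1) by (simp add: powr_realpow[symmetric] powr_powr)
  also have "\<dots> = x ^ k" using assms(1,4) by (simp add: powr_realpow)
  finally have "s ^ d \<le> (x powr q) ^ d" using assms(5) by simp
  thus ?thesis using assms(3) by (cases d) (auto intro: power_le_imp_le_base)
qed
lemma S_upper_cert: assumes "0 < p" "x powr p \<le> X" "y powr p \<le> Yv" "X + Yv \<le> R" "R \<le> r powr p" "0 < r"
  shows "S p x y \<le> r"
proof -
  have "S p x y \<le> (r powr p) powr (1/p)" unfolding S_def using assms by (intro powr_mono2) auto
  thus ?thesis using assms by (simp add: powr_powr)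
qed
lemma S_lower_cert: assumes "0 < p" "X \<le> x powr p" "Yv \<le> y powr p" "R \<le> X + Yv" "r powr p \<le> R" "0 < r"
  shows "r \<le> S p x y"
proof -
  have "(r powr p) powr (1/p) \<le> S p x y" unfolding S_def using assms by (intro powr_mono2) auto
  thus ?thesis using assms by (simp add: powr_powr)
qed
lemma two_powr_upper: assumes "0 < (p0::real)" "p0 \<le> p" "2 powr (1/p0) \<le> u" shows "2 powr (1/p) \<le> u"
proof -
  have "1/p \<le> 1/p0" using assms by (intro divide_left_mono) auto
  hence "2 powr (1/p) \<le> 2 powr (1/p0)" by (intro powr_mono) auto
  thus ?thesis using assms by linarith
qed
lemma two_powr_lower: assumes "0 < (p::real)" "p \<le> p1" "l \<le> 2 powr (1/p1)" shows "l \<le> 2 powr (1/p)"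
proof -
  have "1/p1 \<le> 1/p" using assms by (intro divide_left_mono) auto
  hence "2 powr (1/p1) \<le> 2 powr (1/p)" by (intro powr_mono) auto
  thus ?thesis using assms by linarith
qed
lemma S_upper_int: "0 < p0 \<Longrightarrow> p0 \<le> p \<Longrightarrow> x > 0 \<Longrightarrow> y > 0 \<Longrightarrow> S p0 x y \<le> r \<Longrightarrow> S p x y \<le> r"
  using S_mono[of x y p0 p] by linarith
lemma S_lower_int: "0 < p \<Longrightarrow> p \<le> p1 \<Longrightarrow> x > 0 \<Longrightarrow> y > 0 \<Longrightarrow> r \<le> S p1 x y \<Longrightarrow> r \<le> S p x y"
  using S_mono[of x y p p1] by linarith

lemma n7_int0: assumes "(2) \<le> p" "p \<le> (25/12)" shows "\<exists>\<mu>. (\<forall>lam. eigenvalue (sombor_mat p 7 (U4_edge 7)) lam \<longrightarrow> lam \<le> \<mu>) \<and> (\<exists>lam > \<mu>. eigenvalue (sombor_mat p 7 (U3_edge 7)) lam)"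
proof (rule key7[where uU="14143/10000" and G="22361/5000" and dU="2577/625" and lL="13947/10000" and aL="5343/1000" and cL="3177/625" and \<mu>="11893/1000" and Y="11893/1000" and Z="8951/1000"])
  show p2: "2 \<le> p" using assms(1) by simp
  have pp: "0 < p" using p2 by simp
  show "2 powr (1/p) \<le> 14143/10000" by (rule two_powr_upper[OF _ assms(1)], simp, rule powr_le_cert[where d=2 and k=1], simp_all add: power_divide le_divide_eq divide_le_eq)
  have "S (2) 4 2 \<le> 22361/5000" by (rule S_upper_cert[where X="16" and Yv="4" and R="20"], simp, (rule powr_le_cert[where d=1 and k=2]; simp_all add: power_divide le_divide_eq divide_le_eq), (rule powr_le_cert[where d=1 and k=2]; simp_all add: power_divide le_divide_eq divide_le_eq), simp, (rule powr_ge_cert[where d=1 and k=2]; simp_all add: power_divide le_divide_eq divide_le_eq), simp)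
  thus "S p 4 2 \<le> 22361/5000" by (intro S_upper_int[OF _ assms(1)]) auto
  have "S (2) 4 1 \<le> 2577/625" by (rule S_upper_cert[where X="16" and Yv="1" and R="17"], simp, (rule powr_le_cert[where d=1 and k=2]; simp_all add: power_divide le_divide_eq divide_le_eq), (rule powr_le_cert[where d=1 and k=2]; simp_all add: power_divide le_divide_eq divide_le_eq), simp, (rule powr_ge_cert[where d=1 and k=2]; simp_all add: power_divide le_divide_eq divide_le_eq), simp)
  thus "S p 4 1 \<le> 2577/625" by (intro S_upper_int[OF _ assms(1)]) auto
  show "13947/10000 \<le> 2 powr (1/p)" by (rule two_powr_lower[OF pp assms(2)], rule powr_ge_cert[where d=25 and k=12], simp_all add: power_divide le_divide_eq divide_le_eq)
  have "5343/1000 \<le> S (25/12) 5 2" by (rule S_lower_cert[where X="285882459/10000000" and Yv="423785237/100000000" and R="3282609827/100000000"], simp, (rule powr_ge_cert[where d=12 and k=25]; simp_all add: power_divide le_divide_eq divide_le_eq), (rule powr_ge_cert[where d=12 and k=25]; simp_all add: power_divide le_divide_eq divide_le_eq), simp, (rule powr_le_cert[where d=12 and k=25]; simp_all add: power_divide le_divide_eq divide_le_eq), simp)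
  thus "5343/1000 \<le> S p 5 2" by (intro S_lower_int[OF pp assms(2)]) auto
  have "3177/625 \<le> S (25/12) 5 1" by (rule S_lower_cert[where X="285882459/10000000" and Yv="1" and R="295882459/10000000"], simp, (rule powr_ge_cert[where d=12 and k=25]; simp_all add: power_divide le_divide_eq divide_le_eq), (rule powr_ge_cert[where d=12 and k=25]; simp_all add: power_divide le_divide_eq divide_le_eq), simp, (rule powr_le_cert[where d=12 and k=25]; simp_all add: power_divide le_divide_eq divide_le_eq), simp)
  thus "3177/625 \<le> S p 5 1" by (intro S_lower_int[OF pp assms(2)]) auto
qed (simp_all add: power2_eq_square power4_eq_xxxx)

lemma n7_int1: assumes "(25/12) \<le> p" "p \<le> (9/4)" shows "\<exists>\<mu>. (\<forall>lam. eigenvalue (sombor_mat p 7 (U4_edge 7)) lam \<longrightarrow> lam \<le> \<mu>) \<and> (\<exists>lam > \<mu>. eigenvalue (sombor_mat p 7 (U3_edge 7)) lam)"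
proof (rule key7[where uU="3487/2500" and G="22141/5000" and dU="8211/2000" and lL="13607/10000" and aL="52733/10000" and cL="5059/1000" and \<mu>="5891/500" and Y="5891/500" and Z="8863/1000"])
  show p2: "2 \<le> p" using assms(1) by simp
  have pp: "0 < p" using p2 by simp
  show "2 powr (1/p) \<le> 3487/2500" by (rule two_powr_upper[OF _ assms(1)], simp, rule powr_le_cert[where d=25 and k=12], simp_all add: power_divide le_divide_eq divide_le_eq)
  have "S (25/12) 4 2 \<le> 22141/5000" by (rule S_upper_cert[where X="897969639/50000000" and Yv="211892619/50000000" and R="554931129/25000000"], simp, (rule powr_le_cert[where d=12 and k=25]; simp_all add: power_divide le_divide_eq divide_le_eq), (rule powr_le_cert[where d=12 and k=25]; simp_all add: power_divide le_divide_eq divide_le_eq), simp, (rule powr_ge_cert[where d=12 and k=25]; simp_all add: power_divide le_divide_eq divide_le_eq), simp)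
  thus "S p 4 2 \<le> 22141/5000" by (intro S_upper_int[OF _ assms(1)]) auto
  have "S (25/12) 4 1 \<le> 8211/2000" by (rule S_upper_cert[where X="897969639/50000000" and Yv="1" and R="947969639/50000000"], simp, (rule powr_le_cert[where d=12 and k=25]; simp_all add: power_divide le_divide_eq divide_le_eq), (rule powr_le_cert[where d=12 and k=25]; simp_all add: power_divide le_divide_eq divide_le_eq), simp, (rule powr_ge_cert[where d=12 and k=25]; simp_all add: power_divide le_divide_eq divide_le_eq), simp)
  thus "S p 4 1 \<le> 8211/2000" by (intro S_upper_int[OF _ assms(1)]) auto
  show "13607/10000 \<le> 2 powr (1/p)" by (rule two_powr_lower[OF pp assms(2)], rule powr_ge_cert[where d=9 and k=4], simp_all add: power_divide le_divide_eq divide_le_eq)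
  have "52733/10000 \<le> S (9/4) 5 2" by (rule S_lower_cert[where X="3738371953/100000000" and Yv="237841423/50000000" and R="4214054799/100000000"], simp, (rule powr_ge_cert[where d=4 and k=9]; simp_all add: power_divide le_divide_eq divide_le_eq), (rule powr_ge_cert[where d=4 and k=9]; simp_all add: power_divide le_divide_eq divide_le_eq), simp, (rule powr_le_cert[where d=4 and k=9]; simp_all add: power_divide le_divide_eq divide_le_eq), simp)
  thus "52733/10000 \<le> S p 5 2" by (intro S_lower_int[OF pp assms(2)]) auto
  have "5059/1000 \<le> S (9/4) 5 1" by (rule S_lower_cert[where X="3738371953/100000000" and Yv="1" and R="3838371953/100000000"], simp, (rule powr_ge_cert[where d=4 and k=9]; simp_all add: power_divide le_divide_eq divide_le_eq), (rule powr_ge_cert[where d=4 and k=9]; simp_all add: power_divide le_divide_eq divide_le_eq), simp, (rule powr_le_cert[where d=4 and k=9]; simp_all add: power_divide le_divide_eq divide_le_eq), simp)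
  thus "5059/1000 \<le> S p 5 1" by (intro S_lower_int[OF pp assms(2)]) auto
qed (simp_all add: power2_eq_square power4_eq_xxxx)

lemma n7_int2: assumes "(9/4) \<le> p" "p \<le> (5/2)" shows "\<exists>\<mu>. (\<forall>lam. eigenvalue (sombor_mat p 7 (U4_edge 7)) lam \<longrightarrow> lam \<le> \<mu>) \<and> (\<exists>lam > \<mu>. eigenvalue (sombor_mat p 7 (U3_edge 7)) lam)"
proof (rule key7[where uU="1701/1250" and G="43541/10000" and dU="40777/10000" and lL="2639/2000" and aL="10393/2000" and cL="10071/2000" and \<mu>="2907/250" and Y="2907/250" and Z="437/50"])
  show p2: "2 \<le> p" using assms(1) by simp
  have pp: "0 < p" using p2 by simp
  show "2 powr (1/p) \<le> 1701/1250" by (rule two_powr_upper[OF _ assms(1)], simp, rule powr_le_cert[where d=9 and k=4], simp_all add: power_divide le_divide_eq divide_le_eq)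
  have "S (9/4) 4 2 \<le> 43541/10000" by (rule S_upper_cert[where X="22627417/1000000" and Yv="475682847/100000000" and R="2738424547/100000000"], simp, (rule powr_le_cert[where d=4 and k=9]; simp_all add: power_divide le_divide_eq divide_le_eq), (rule powr_le_cert[where d=4 and k=9]; simp_all add: power_divide le_divide_eq divide_le_eq), simp, (rule powr_ge_cert[where d=4 and k=9]; simp_all add: power_divide le_divide_eq divide_le_eq), simp)
  thus "S p 4 2 \<le> 43541/10000" by (intro S_upper_int[OF _ assms(1)]) auto
  have "S (9/4) 4 1 \<le> 40777/10000" by (rule S_upper_cert[where X="22627417/1000000" and Yv="1" and R="23627417/1000000"], simp, (rule powr_le_cert[where d=4 and k=9]; simp_all add: power_divide le_divide_eq divide_le_eq), (rule powr_le_cert[where d=4 and k=9]; simp_all add: power_divide le_divide_eq divide_le_eq), simp, (rule powr_ge_cert[where d=4 and k=9]; simp_all add: power_divide le_divide_eq divide_le_eq), simp)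
  thus "S p 4 1 \<le> 40777/10000" by (intro S_upper_int[OF _ assms(1)]) auto
  show "2639/2000 \<le> 2 powr (1/p)" by (rule two_powr_lower[OF pp assms(2)], rule powr_ge_cert[where d=5 and k=2], simp_all add: power_divide le_divide_eq divide_le_eq)
  have "10393/2000 \<le> S (5/2) 5 2" by (rule S_lower_cert[where X="5590169943/100000000" and Yv="35355339/6250000" and R="6155855367/100000000"], simp, (rule powr_ge_cert[where d=2 and k=5]; simp_all add: power_divide le_divide_eq divide_le_eq), (rule powr_ge_cert[where d=2 and k=5]; simp_all add: power_divide le_divide_eq divide_le_eq), simp, (rule powr_le_cert[where d=2 and k=5]; simp_all add: power_divide le_divide_eq divide_le_eq), simp)
  thus "10393/2000 \<le> S p 5 2" by (intro S_lower_int[OF pp assms(2)]) auto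
  have "10071/2000 \<le> S (5/2) 5 1" by (rule S_lower_cert[where X="5590169943/100000000" and Yv="1" and R="5690169943/100000000"], simp, (rule powr_ge_cert[where d=2 and k=5]; simp_all add: power_divide le_divide_eq divide_le_eq), (rule powr_ge_cert[where d=2 and k=5]; simp_all add: power_divide le_divide_eq divide_le_eq), simp, (rule powr_le_cert[where d=2 and k=5]; simp_all add: power_divide le_divide_eq divide_le_eq), simp)
  thus "10071/2000 \<le> S p 5 1" by (intro S_lower_int[OF pp assms(2)]) auto
qed (simp_all add: power2_eq_square power4_eq_xxxx)

lemma n7_int3: assumes "(5/2) \<le> p" "p \<le> (3)" shows "\<exists>\<mu>. (\<forall>lam. eigenvalue (sombor_mat p 7 (U4_edge 7)) lam \<longrightarrow> lam \<le> \<mu>) \<and> (\<exists>lam > \<mu>. eigenvalue (sombor_mat p 7 (U3_edge 7)) lam)"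
proof (rule key7[where uU="3299/2500" and G="10673/2500" and dU="2531/625" and lL="12599/10000" and aL="12761/2500" and cL="12533/2500" and \<mu>="11451/1000" and Y="11451/1000" and Z="43/5"])
  show p2: "2 \<le> p" using assms(1) by simp
  have pp: "0 < p" using p2 by simp
  show "2 powr (1/p) \<le> 3299/2500" by (rule two_powr_upper[OF _ assms(1)], simp, rule powr_le_cert[where d=5 and k=2], simp_all add: power_divide le_divide_eq divide_le_eq)
  have "S (5/2) 4 2 \<le> 10673/2500" by (rule S_upper_cert[where X="32" and Yv="22627417/4000000" and R="150627417/4000000"], simp, (rule powr_le_cert[where d=2 and k=5]; simp_all add: power_divide le_divide_eq divide_le_eq), (rule powr_le_cert[where d=2 and k=5]; simp_all add: power_divide le_divide_eq divide_le_eq), simp, (rule powr_ge_cert[where d=2 and k=5]; simp_all add: power_divide le_divide_eq divide_le_eq), simp)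
  thus "S p 4 2 \<le> 10673/2500" by (intro S_upper_int[OF _ assms(1)]) auto
  have "S (5/2) 4 1 \<le> 2531/625" by (rule S_upper_cert[where X="32" and Yv="1" and R="33"], simp, (rule powr_le_cert[where d=2 and k=5]; simp_all add: power_divide le_divide_eq divide_le_eq), (rule powr_le_cert[where d=2 and k=5]; simp_all add: power_divide le_divide_eq divide_le_eq), simp, (rule powr_ge_cert[where d=2 and k=5]; simp_all add: power_divide le_divide_eq divide_le_eq), simp)
  thus "S p 4 1 \<le> 2531/625" by (intro S_upper_int[OF _ assms(1)]) auto
  show "12599/10000 \<le> 2 powr (1/p)" by (rule two_powr_lower[OF pp assms(2)], rule powr_ge_cert[where d=3 and k=1], simp_all add: power_divide le_divide_eq divide_le_eq)
  have "12761/2500 \<le> S (3) 5 2" by (rule S_lower_cert[where X="125" and Yv="8" and R="133"], simp, (rule powr_ge_cert[where d=1 and k=3]; simp_all add: power_divide le_divide_eq divide_le_eq), (rule powr_ge_cert[where d=1 and k=3]; simp_all add: power_divide le_divide_eq divide_le_eq), simp, (rule powr_le_cert[where d=1 and k=3]; simp_all add: power_divide le_divide_eq divide_le_eq), simp)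
  thus "12761/2500 \<le> S p 5 2" by (intro S_lower_int[OF pp assms(2)]) auto
  have "12533/2500 \<le> S (3) 5 1" by (rule S_lower_cert[where X="125" and Yv="1" and R="126"], simp, (rule powr_ge_cert[where d=1 and k=3]; simp_all add: power_divide le_divide_eq divide_le_eq), (rule powr_ge_cert[where d=1 and k=3]; simp_all add: power_divide le_divide_eq divide_le_eq), simp, (rule powr_le_cert[where d=1 and k=3]; simp_all add: power_divide le_divide_eq divide_le_eq), simp)
  thus "12533/2500 \<le> S p 5 1" by (intro S_lower_int[OF pp assms(2)]) auto
qed (simp_all add: power2_eq_square power4_eq_xxxx)

lemma n7_int4: assumes "(3) \<le> p"  shows "\<exists>\<mu>. (\<forall>lam. eigenvalue (sombor_mat p 7 (U4_edge 7)) lam \<longrightarrow> lam \<le> \<mu>) \<and> (\<exists>lam > \<mu>. eigenvalue (sombor_mat p 7 (U3_edge 7)) lam)"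
proof (rule key7[where uU="63/50" and G="20801/5000" and dU="2513/625" and lL="1" and aL="5" and cL="5" and \<mu>="2801/250" and Y="2801/250" and Z="2103/250"])
  show p2: "2 \<le> p" using assms(1) by simp
  have pp: "0 < p" using p2 by simp
  show "2 powr (1/p) \<le> 63/50" by (rule two_powr_upper[OF _ assms(1)], simp, rule powr_le_cert[where d=3 and k=1], simp_all add: power_divide le_divide_eq divide_le_eq)
  have "S (3) 4 2 \<le> 20801/5000" by (rule S_upper_cert[where X="64" and Yv="8" and R="72"], simp, (rule powr_le_cert[where d=1 and k=3]; simp_all add: power_divide le_divide_eq divide_le_eq), (rule powr_le_cert[where d=1 and k=3]; simp_all add: power_divide le_divide_eq divide_le_eq), simp, (rule powr_ge_cert[where d=1 and k=3]; simp_all add: power_divide le_divide_eq divide_le_eq), simp)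
  thus "S p 4 2 \<le> 20801/5000" by (intro S_upper_int[OF _ assms(1)]) auto
  have "S (3) 4 1 \<le> 2513/625" by (rule S_upper_cert[where X="64" and Yv="1" and R="65"], simp, (rule powr_le_cert[where d=1 and k=3]; simp_all add: power_divide le_divide_eq divide_le_eq), (rule powr_le_cert[where d=1 and k=3]; simp_all add: power_divide le_divide_eq divide_le_eq), simp, (rule powr_ge_cert[where d=1 and k=3]; simp_all add: power_divide le_divide_eq divide_le_eq), simp)
  thus "S p 4 1 \<le> 2513/625" by (intro S_upper_int[OF _ assms(1)]) auto
  show "1 \<le> 2 powr (1/p)" by (rule ge_one_powr_ge_zero) (use pp in auto)
  show "5 \<le> S p 5 2" "5 \<le> S p 5 1" using pp by (auto intro: S_ge1)
qed (simp_all add: power2_eq_square power4_eq_xxxx)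

lemma key7_all: assumes "p \<ge> 2"
  shows "\<exists>\<mu>. (\<forall>lam. eigenvalue (sombor_mat p 7 (U4_edge 7)) lam \<longrightarrow> lam \<le> \<mu>) \<and> (\<exists>lam > \<mu>. eigenvalue (sombor_mat p 7 (U3_edge 7)) lam)"
proof -
  consider "p \<le> 25/12" | "25/12 \<le> p" "p \<le> 9/4" | "9/4 \<le> p" "p \<le> 5/2" | "5/2 \<le> p" "p \<le> 3" | "3 \<le> p" by linarith
  thus ?thesis
  proof cases
    case 1 thus ?thesis using n7_int0 assms by simp
  next
    case 2 thus ?thesis using n7_int1 by simp
  next
    case 3 thus ?thesis using n7_int2 by simp
  next
    case 4 thus ?thesis using n7_int3 by simp
  next
    case 5 thus ?thesis using n7_int4 by simp
  qed
qed

lemma key: assumes n: "n \<ge> 7" and p: "p \<ge> 2"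
  shows "\<exists>\<mu>. (\<forall>lam. eigenvalue (sombor_mat p n (U4_edge n)) lam \<longrightarrow> lam \<le> \<mu>) \<and>
            (\<exists>lam > \<mu>. eigenvalue (sombor_mat p n (U3_edge n)) lam)"
proof -
  consider "n = 7" | "n = 8" | "n \<ge> 9" using n by linarith
  thus ?thesis
  proof cases
    case 1 thus ?thesis using key7_all[OF p] by simp
  next
    case 2 thus ?thesis using key8[OF p] by simp
  next
    case 3 thus ?thesis using key_large[OF _ p] by simp
  qed
qed


theorem lemma4p2:
  fixes n :: nat and p :: real
  assumes "n \<ge> 7" and "p \<ge> 2"
  shows "largest_eig (sombor_mat p n (U4_edge n)) < largest_eig (sombor_mat p n (U3_edge n))"
proof -
  obtain \<mu> lam where u4: "\<forall>l. eigenvalue (sombor_mat p n (U4_edge n)) l \<longrightarrow> l \<le> \<mu>"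
    and lam: "lam > \<mu>" "eigenvalue (sombor_mat p n (U3_edge n)) lam"
    using key[OF assms] by blast
  have f3: "finite {k. eigenvalue (sombor_mat p n (U3_edge n)) k}" by (rule eig_finite[OF sombor_carrier])
  have f4: "finite {k. eigenvalue (sombor_mat p n (U4_edge n)) k}" by (rule eig_finite[OF sombor_carrier])
  have ne: "{k. eigenvalue (sombor_mat p n (U4_edge n)) k} \<noteq> {}"
    using U4_eig0[OF assms(1), of p] assms(2) by auto
  have "largest_eig (sombor_mat p n (U4_edge n)) \<in> {k. eigenvalue (sombor_mat p n (U4_edge n)) k}"
    unfolding largest_eig_def by (rule Max_in[OF f4 ne])
  hence "largest_eig (sombor_mat p n (U4_edge n)) \<le> \<mu>" using u4 by auto
  also have "\<mu> < lam" by fact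
  also have "lam \<le> largest_eig (sombor_mat p n (U3_edge n))"
    unfolding largest_eig_def using f3 lam(2) by (intro Max_ge) auto
  finally show ?thesis .
qed

end
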